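(* Let $n\geq m\geq 1$ and let $\mathcal{C},\mathcal{D}\subseteq\binom{[n]}{m}$ be such that $\mathcal{S}^{tnz}_{\mathcal{C}}(\mathbb{R})$ and $\mathcal{S}^{tnz}_{\mathcal{D}}(\mathbb{R})$ are non-empty. Then these strata lie in the same orbit of the action of $(\mathbb{R}^* )^n\rtimes S_n$ on $\mathcal{S}^{tnz}_{mn}(\mathbb{R})$ if and only if for any two matrices $M=(v_1,\dots,v_n),N=(w_1,\dots,w_n)\in Mat^{tnz}_{mn}(\mathbb{R})$ with $GL_m(\mathbb{R})M\in\mathcal{S}^{tnz}_{\mathcal{C}}(\mathbb{R})$, $GL_m(\mathbb{R})N\in\mathcal{S}^{tnz}_{\mathcal{D}}(\mathbb{R})$, the sets $\{\pm v_1,\dots,\pm v_n\}$ and $\{\pm w_1,\dots,\pm w_n\}$ are isomorphic antipodal point arrangements.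
   Context: A point arrangement $S\subset\mathbb{R}^m$ is generic if every subset of cardinality at most $m$ is linearly independent. A (conventional) antipodal point arrangement of cardinality $2n$ is a set $\{\pm v_1,\dots,\pm v_n\}\subset\mathbb{R}^m$ ($n\ge m$) such that $\{v_1,\dots,v_n\}$ is a generic point arrangement; $\{v,-v\}$ is called an antipodal pair. Two antipodal arrangements $S_1,S_2$ are isomorphic if there is a bijection $\sigma:S_1\to S_2$ with $\sigma(-v)=-\sigma(v)$ for all $v\in S_1$ such that for every $(m+1)$-subset $\{v_{i_1},\dots,v_{i_{m+1}}\}\subseteq S_1$ containing no antipodal pair, writing $v_{i_{m+1}}=\sum_{j=1}^m a_jv_{i_j}$ and $\sigma(v_{i_{m+1}})=\sum_{j=1}^m b_j\sigma(v_{i_j})$, one has: $a_j>0$ for all $j$ if and only if $b_j>0$ for all $j$. $Mat^{tnz}_{mn}(\mathbb{R})$ is the set of real $m\times n$ matrices with all maximal minors $\Delta_I(M)$, $I\in\binom{[n]}{m}$, nonzero; $Gr^{tnz}_{mn}(\mathbb{R})=GL_m(\mathbb{R})\backslash Mat^{tnz}_{mn}(\mathbb{R})$. For $\mathcal{C}\subseteq\binom{[n]}{m}$, the stratum $\mathcal{S}^{tnz}_{\mathcal{C}}(\mathbb{R})$ is the set of $GL_m(\mathbb{R})M$ with either ($\Delta_I(M)>0$ for $I\in\mathcal{C}$ and $<0$ for $I\notin\mathcal{C}$) or ($\Delta_I(M)<0$ for $I\in\mathcal{C}$ and $>0$ for $I\notin\mathcal{C}$); $\mathcal{S}^{tnz}_{mn}(\mathbb{R})$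 is the set of non-empty strata. The group $(\mathbb{R}^* )^n\rtimes S_n$ has multiplication $((s_i),\tau)\cdot((t_i),\sigma)=((s_{\sigma(i)}t_i)_i,\tau\sigma)$ and acts on $Gr^{tnz}_{mn}(\mathbb{R})$ by $((t_1,\dots,t_n),\sigma)\bullet GL_m(\mathbb{R})(v_1,\dots,v_n)=GL_m(\mathbb{R})(t_{\sigma^{-1}(1)}v_{\sigma^{-1}(1)},\dots,t_{\sigma^{-1}(n)}v_{\sigma^{-1}(n)})$; this induces an action on $\mathcal{S}^{tnz}_{mn}(\mathbb{R})$ sending the stratum of $GL_m(\mathbb{R})M$ to the stratum of its image. *)

theory Defs
  imports Complex_Main "HOL-Combinatorics.Permutations"
begin

text \<open>An m x n real matrix is a function M :: nat => nat => real,
  M r j = entry in row r < m, column j < n (entries outside the range are ignored).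
  Columns are indexed 0..<n (so [n] is {..<n}); row coordinates 0..<m.\<close>

definition detn :: "nat \<Rightarrow> (nat \<Rightarrow> nat \<Rightarrow> real) \<Rightarrow> real" where
  "detn m A = (\<Sum>p | p permutes {..<m}. of_int (sign p) * (\<Prod>i<m. A i (p i)))"

definition msubsets :: "nat \<Rightarrow> nat \<Rightarrow> nat set set" where
  "msubsets m n = {I. I \<subseteq> {..<n} \<and> card I = m}"

definition minor :: "nat \<Rightarrow> (nat \<Rightarrow> nat \<Rightarrow> real) \<Rightarrow> nat set \<Rightarrow> real" where
  "minor m M I = detn m (\<lambda>r k. M r (sorted_list_of_set I ! k))"

definition tnz :: "nat \<Rightarrow> nat \<Rightarrow> (nat \<Rightarrow> nat \<Rightarrow> real) \<Rightarrow> bool" where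
  "tnz m n M \<longleftrightarrow> (\<forall>I\<in>msubsets m n. minor m M I \<noteq> 0)"

text \<open>GL_m(R) M lies in the stratum S^tnz_C(R) (the condition is GL_m-invariant).\<close>
definition in_stratum :: "nat \<Rightarrow> nat \<Rightarrow> nat set set \<Rightarrow> (nat \<Rightarrow> nat \<Rightarrow> real) \<Rightarrow> bool" where
  "in_stratum m n C M \<longleftrightarrow> tnz m n M \<and>
     ((\<forall>I\<in>msubsets m n. (I \<in> C \<longrightarrow> minor m M I > 0) \<and> (I \<notin> C \<longrightarrow> minor m M I < 0)) \<or>
      (\<forall>I\<in>msubsets m n. (I \<in> C \<longrightarrow> minor m M I < 0) \<and> (I \<notin> C \<longrightarrow> minor m M I > 0)))"

definition act :: "(nat \<Rightarrow> real) \<Rightarrow> (nat \<Rightarrow> nat) \<Rightarrow> (nat \<Rightarrow> nat \<Rightarrow> real) \<Rightarrow> (nat \<Rightarrow> nat \<Rightarrow> real)" where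
  "act t \<sigma> M = (\<lambda>r j. t (inv \<sigma> j) * M r (inv \<sigma> j))"

text \<open>The strata S_C and S_D lie in the same orbit of (R^*)^n x| S_n:
  some group element maps the stratum S_C onto (into) the stratum S_D.\<close>
definition same_orbit :: "nat \<Rightarrow> nat \<Rightarrow> nat set set \<Rightarrow> nat set set \<Rightarrow> bool" where
  "same_orbit m n C D \<longleftrightarrow> (\<exists>t \<sigma>. (\<forall>i<n. t i \<noteq> 0) \<and> \<sigma> permutes {..<n} \<and>
      (\<forall>M. in_stratum m n C M \<longrightarrow> in_stratum m n D (act t \<sigma> M)))"

definition generic :: "nat \<Rightarrow> nat \<Rightarrow> (nat \<Rightarrow> nat \<Rightarrow> real) \<Rightarrow> bool" where
  "generic m n M \<longleftrightarrow> (\<forall>J \<subseteq> {..<n}. card J \<le> m \<longrightarrow>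
      (\<forall>c. (\<forall>r<m. (\<Sum>j\<in>J. c j * M r j) = 0) \<longrightarrow> (\<forall>j\<in>J. c j = 0)))"

text \<open>Points of the antipodal arrangement {+-v_1,..,+-v_n}, labelled by (s,j):
  (True,j) is v_j and (False,j) is -v_j.\<close>
definition labels :: "nat \<Rightarrow> (bool \<times> nat) set" where
  "labels n = UNIV \<times> {..<n}"

definition pt :: "(nat \<Rightarrow> nat \<Rightarrow> real) \<Rightarrow> bool \<times> nat \<Rightarrow> nat \<Rightarrow> real" where
  "pt M x = (\<lambda>r. (if fst x then 1 else -1) * M r (snd x))"

definition aneg :: "bool \<times> nat \<Rightarrow> bool \<times> nat" where
  "aneg x = (\<not> fst x, snd x)"

definition no_antipodal_pair :: "(bool \<times> nat) set \<Rightarrow> bool" where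
  "no_antipodal_pair T \<longleftrightarrow> (\<forall>x\<in>T. aneg x \<notin> T)"

text \<open>p x = sum_{y in B} a_y p y with all a_y > 0 (coefficients are unique since B is a basis).\<close>
definition pos_comb :: "nat \<Rightarrow> (bool \<times> nat \<Rightarrow> nat \<Rightarrow> real) \<Rightarrow> bool \<times> nat \<Rightarrow> (bool \<times> nat) set \<Rightarrow> bool" where
  "pos_comb m p x B \<longleftrightarrow> (\<exists>a. (\<forall>y\<in>B. a y > 0) \<and> (\<forall>r<m. p x r = (\<Sum>y\<in>B. a y * p y r)))"

definition antipodal_iso :: "nat \<Rightarrow> nat \<Rightarrow> (nat \<Rightarrow> nat \<Rightarrow> real) \<Rightarrow> (nat \<Rightarrow> nat \<Rightarrow> real) \<Rightarrow> bool" where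
  "antipodal_iso m n M N \<longleftrightarrow> m \<le> n \<and> generic m n M \<and> generic m n N \<and>
     (\<exists>\<sigma>. bij_betw \<sigma> (labels n) (labels n) \<and>
        (\<forall>x\<in>labels n. \<sigma> (aneg x) = aneg (\<sigma> x)) \<and>
        (\<forall>T \<subseteq> labels n. card T = m + 1 \<longrightarrow> no_antipodal_pair T \<longrightarrow>
           (\<forall>x\<in>T. pos_comb m (pt M) x (T - {x}) \<longleftrightarrow>
                   pos_comb m (pt N) (\<sigma> x) (\<sigma> ` (T - {x})))))"

end

theory Submission
  imports Defs "Jordan_Normal_Form.Determinant"
begin

lemma detn_det: "detn m A = det (mat m m (\<lambda>(i,j). A i j))"
  unfolding detn_def
  by (subst det_def'[of _ m]) (auto simp: atLeast0LessThan intro!: sum.cong prod.cong dest: permutes_in_image)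

lemma detn_cramer:
  assumes k: "k < m"
  shows "detn m (\<lambda>r j. if j = k then (\<Sum>i<m. A r i * c i) else A r j) = c k * detn m A"
proof -
  let ?AA = "mat m m (\<lambda>(i,j). A i j)"
  let ?x = "vec m c"
  have AA: "?AA \<in> carrier_mat m m" by simp
  have x: "?x \<in> carrier_vec m" by simp
  have eq: "replace_col ?AA (?AA *\<^sub>v ?x) k = mat m m (\<lambda>(r,j). if j = k then (\<Sum>i<m. A r i * c i) else A r j)"
    by (rule eq_matI) (auto simp: replace_col_def scalar_prod_def atLeast0LessThan intro!: sum.cong)
  show ?thesis
    using cramer_lemma_mat[OF AA x k] k unfolding detn_det eq by simp
qed

lemma detn_solve:
  assumes d: "detn m A \<noteq> 0"
  shows "\<exists>c. \<forall>r<m. (\<Sum>i<m. A r i * c i) = v r"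
proof -
  let ?AA = "mat m m (\<lambda>(i,j). A i j)"
  have AA: "?AA \<in> carrier_mat m m" by simp
  define B where "B = adj_mat ?AA"
  define dd where "dd = det ?AA"
  have dd: "dd \<noteq> 0" using d unfolding dd_def detn_det .
  have Bc: "B \<in> carrier_mat m m" using adj_mat(1)[OF AA] unfolding B_def .
  have prod: "?AA * B = dd \<cdot>\<^sub>m 1\<^sub>m m" using adj_mat(2)[OF AA] unfolding B_def dd_def .
  have ent: "(\<Sum>i<m. A r i * B $$ (i,j)) = (if r = j then dd else 0)" if "r < m" "j < m" for r j
  proof -
    have "(?AA * B) $$ (r,j) = (\<Sum>i<m. A r i * B $$ (i,j))"
      using that Bc by (auto simp: scalar_prod_def atLeast0LessThan intro!: sum.cong)
    then show ?thesis using prod that by (cases "r = j") auto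
  qed
  define c where "c i = (\<Sum>j<m. B $$ (i,j) * v j) / dd" for i
  have "(\<Sum>i<m. A r i * c i) = v r" if r: "r < m" for r
  proof -
    have "(\<Sum>i<m. A r i * c i) = (\<Sum>i<m. \<Sum>j<m. A r i * B $$ (i,j) * v j) / dd"
      unfolding c_def by (simp add: sum_divide_distrib sum_distrib_left mult.assoc)
    also have "\<dots> = (\<Sum>j<m. (\<Sum>i<m. A r i * B $$ (i,j)) * v j) / dd"
      by (subst sum.swap) (simp add: sum_distrib_right)
    also have "\<dots> = (\<Sum>j<m. (if r = j then dd else 0) * v j) / dd"
      using ent r by simp
    also have "\<dots> = (\<Sum>j<m. if r = j then dd * v j else 0) / dd"
      by (rule arg_cong[where f="\<lambda>x. x / dd"], rule sum.cong) auto
    also have "\<dots> = v r" using r dd by simp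
    finally show ?thesis .
  qed
  then show ?thesis by blast
qed

lemma detn_scale: "detn m (\<lambda>r k. w k * B r k) = (\<Prod>k<m. w k) * detn m B"
  unfolding detn_def sum_distrib_left
proof (rule sum.cong[OF refl])
  fix p assume "p \<in> {p. p permutes {..<m}}"
  then have p: "p permutes {..<m}" by simp
  have "(\<Prod>i<m. w (p i)) = (\<Prod>k<m. w k)"
    using prod.permute[OF p, of w] by (simp add: comp_def)
  then show "of_int (sign p) * (\<Prod>i<m. w (p i) * B i (p i)) =
        (\<Prod>k<m. w k) * (of_int (sign p) * (\<Prod>i<m. B i (p i)))"
    by (simp add: prod.distrib)
qed

lemma detn_permute_cols:
  assumes q: "q permutes {..<m}"
  shows "detn m (\<lambda>r k. B r (q k)) = of_int (sign q) * detn m B"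
proof -
  define AT where "AT = mat m m (\<lambda>(i,j). B j i)"
  have AT: "AT \<in> carrier_mat m m" unfolding AT_def by simp
  have q': "q permutes {0..<m}" using q by (simp add: atLeast0LessThan)
  define C where "C = mat m m (\<lambda>(i,j). B i (q j))"
  have C: "C \<in> carrier_mat m m" unfolding C_def by simp
  have 1: "detn m (\<lambda>r k. B r (q k)) = det C" unfolding detn_det C_def by simp
  have 2: "det C = det (transpose_mat C)" using det_transpose[OF C] by simp
  have 3: "transpose_mat C = mat m m (\<lambda>(i,j). AT $$ (q i, j))"
    unfolding C_def AT_def using permutes_in_image[OF q]
    by (intro eq_matI) auto
  have 4: "det (mat m m (\<lambda>(i,j). AT $$ (q i, j))) = signof q * det AT" by (rule det_permute_rows[OF AT q'])
  have 5: "det AT = det (transpose_mat AT)" using det_transpose[OF AT] by simp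
  have 6: "transpose_mat AT = mat m m (\<lambda>(i,j). B i j)" unfolding AT_def by (intro eq_matI) auto
  have 7: "detn m B = det (mat m m (\<lambda>(i,j). B i j))" by (rule detn_det)
  show ?thesis using 1 2 3 4 5 6 7 by simp
qed

lemma detn_cong:
  assumes "\<And>r j. r < m \<Longrightarrow> j < m \<Longrightarrow> A r j = B r j"
  shows "detn m A = detn m B"
  unfolding detn_def
  by (rule sum.cong[OF refl], rule arg_cong[where f="\<lambda>x. _ * x"], rule prod.cong[OF refl])
     (auto intro!: assms dest: permutes_in_image)

lemma detn_cols_minor:
  assumes d: "distinct js" and l: "length js = m"
  shows "\<exists>\<epsilon>::real. (\<epsilon> = 1 \<or> \<epsilon> = -1) \<and> (\<forall>M. detn m (\<lambda>r k. M r (js!k)) = \<epsilon> * minor m M (set js))"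
proof -
  define ss where "ss = sorted_list_of_set (set js)"
  have ssd: "distinct ss" and sss: "set ss = set js" unfolding ss_def by auto
  have "mset js = mset ss" using set_eq_iff_mset_eq_distinct[OF d ssd] sss by simp
  then obtain p where p: "p permutes {..<length ss}" "permute_list p ss = js"
    by (rule mset_eq_permutation)
  have lss: "length ss = m" using distinct_card[OF ssd] distinct_card[OF d] sss l by simp
  have jsk: "js ! k = ss ! (p k)" if "k < m" for k
    using permute_list_nth[OF p(1), of k] p(2) that lss by simp
  have pm: "p permutes {..<m}" using p(1) lss by simp
  have "detn m (\<lambda>r k. M r (js!k)) = of_int (sign p) * minor m M (set js)" for M
  proof -
    have "detn m (\<lambda>r k. M r (js!k)) = detn m (\<lambda>r k. (\<lambda>r k. M r (ss!k)) r (p k))"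
      by (rule detn_cong) (simp add: jsk)
    also have "\<dots> = of_int (sign p) * detn m (\<lambda>r k. M r (ss!k))"
      by (rule detn_permute_cols[OF pm])
    finally show ?thesis unfolding minor_def ss_def .
  qed
  moreover have "of_int (sign p) = (1::real) \<or> of_int (sign p) = (-1::real)"
    by (simp add: sign_def)
  ultimately show ?thesis by blast
qed

definition sg :: "bool \<Rightarrow> real" where "sg b = (if b then 1 else -1)"

lemma pt_sg: "pt M x r = sg (fst x) * M r (snd x)"
  by (simp add: pt_def sg_def)

lemma sg_sq[simp]: "sg b * sg b = 1" and sg_nz[simp]: "sg b \<noteq> 0"
  by (auto simp: sg_def)

definition ldet :: "nat \<Rightarrow> (nat \<Rightarrow> nat \<Rightarrow> real) \<Rightarrow> (bool \<times> nat) list \<Rightarrow> real" where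
  "ldet m M ls = detn m (\<lambda>r k. pt M (ls!k) r)"

lemma ldet_minor:
  assumes d: "distinct (map snd ls)" and l: "length ls = m"
  shows "\<exists>\<epsilon>::real. \<epsilon> \<noteq> 0 \<and> (\<forall>M. ldet m M ls = \<epsilon> * minor m M (snd ` set ls))"
proof -
  obtain \<epsilon> where e: "\<epsilon> = 1 \<or> \<epsilon> = -1" "\<forall>M. detn m (\<lambda>r k. M r (map snd ls!k)) = \<epsilon> * minor m M (set (map snd ls))"
    using detn_cols_minor[OF d] l by auto
  have "ldet m M ls = ((\<Prod>k<m. sg (fst (ls!k))) * \<epsilon>) * minor m M (snd ` set ls)" for M
  proof -
    have "ldet m M ls = detn m (\<lambda>r k. sg (fst (ls!k)) * M r (map snd ls!k))"
      unfolding ldet_def by (rule detn_cong) (simp add: pt_sg l)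
    also have "\<dots> = (\<Prod>k<m. sg (fst (ls!k))) * detn m (\<lambda>r k. M r (map snd ls!k))"
      by (rule detn_scale)
    finally show ?thesis using e(2) by simp
  qed
  moreover have "(\<Prod>k<m. sg (fst (ls!k))) * \<epsilon> \<noteq> 0" using e(1) by auto
  ultimately show ?thesis by blast
qed

lemma sum_distinct_nth:
  assumes "distinct xs"
  shows "(\<Sum>y\<in>set xs. f y) = (\<Sum>i<length xs. f (xs!i))"
proof -
  have "set xs = (\<lambda>i. xs!i) ` {..<length xs}" by (auto simp: in_set_conv_nth)
  moreover have "inj_on (\<lambda>i. xs!i) {..<length xs}" using assms by (simp add: inj_on_nth)
  ultimately show ?thesis by (simp add: sum.reindex)
qed

lemma pos_comb_nth:
  assumes d: "distinct ls"
  shows "pos_comb m p x (set ls) \<longleftrightarrow>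
    (\<exists>c. (\<forall>i<length ls. c i > 0) \<and> (\<forall>r<m. p x r = (\<Sum>i<length ls. c i * p (ls!i) r)))"
proof
  assume "pos_comb m p x (set ls)"
  then obtain a where a: "\<forall>y\<in>set ls. a y > 0" "\<forall>r<m. p x r = (\<Sum>y\<in>set ls. a y * p y r)"
    unfolding pos_comb_def by blast
  show "\<exists>c. (\<forall>i<length ls. c i > 0) \<and> (\<forall>r<m. p x r = (\<Sum>i<length ls. c i * p (ls!i) r))"
    by (rule exI[of _ "\<lambda>i. a (ls!i)"]) (use a sum_distinct_nth[OF d] in auto)
next
  assume "\<exists>c. (\<forall>i<length ls. c i > 0) \<and> (\<forall>r<m. p x r = (\<Sum>i<length ls. c i * p (ls!i) r))"
  then obtain c where c: "\<forall>i<length ls. c i > 0" "\<forall>r<m. p x r = (\<Sum>i<length ls. c i * p (ls!i) r)"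
    by blast
  define a where "a y = c (inv_into {..<length ls} (\<lambda>i. ls!i) y)" for y
  have inj: "inj_on (\<lambda>i. ls!i) {..<length ls}" using d by (simp add: inj_on_nth)
  have ai: "a (ls!i) = c i" if "i < length ls" for i
    unfolding a_def using inv_into_f_f[OF inj, of i] that by simp
  have "\<forall>y\<in>set ls. a y > 0"
  proof
    fix y assume "y \<in> set ls"
    then obtain i where "i < length ls" "y = ls!i" by (metis in_set_conv_nth)
    then show "a y > 0" using ai c(1) by simp
  qed
  moreover have "\<forall>r<m. p x r = (\<Sum>y\<in>set ls. a y * p y r)"
    using c(2) ai by (simp add: sum_distinct_nth[OF d])
  ultimately show "pos_comb m p x (set ls)" unfolding pos_comb_def by blast
qed

lemma ldet_update:
  assumes l: "length ls = m" and k: "k < m"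
    and c: "\<forall>r<m. pt M x r = (\<Sum>i<m. c i * pt M (ls!i) r)"
  shows "ldet m M (ls[k:=x]) = c k * ldet m M ls"
proof -
  have "ldet m M (ls[k:=x]) = detn m (\<lambda>r j. if j = k then (\<Sum>i<m. pt M (ls!i) r * c i) else pt M (ls!j) r)"
    unfolding ldet_def by (rule detn_cong) (use c l in \<open>auto simp: nth_list_update mult.commute\<close>)
  also have "\<dots> = c k * ldet m M ls" unfolding ldet_def by (rule detn_cramer[OF k])
  finally show ?thesis .
qed

lemma pc_char:
  assumes l: "length ls = m" and d: "distinct ls" and nz: "ldet m M ls \<noteq> 0"
  shows "pos_comb m (pt M) x (set ls) \<longleftrightarrow> (\<forall>k<m. ldet m M (ls[k:=x]) * ldet m M ls > 0)"
proof
  assume "pos_comb m (pt M) x (set ls)"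
  then obtain c where c: "\<forall>i<m. c i > 0" "\<forall>r<m. pt M x r = (\<Sum>i<m. c i * pt M (ls!i) r)"
    unfolding pos_comb_nth[OF d] l by blast
  show "\<forall>k<m. ldet m M (ls[k:=x]) * ldet m M ls > 0"
  proof (intro allI impI)
    fix k assume k: "k < m"
    have "ldet m M (ls[k:=x]) * ldet m M ls = c k * (ldet m M ls * ldet m M ls)"
      using ldet_update[OF l k c(2)] by simp
    also have "\<dots> > 0" using c(1) k nz by (auto simp: zero_less_mult_iff linorder_neq_iff)
    finally show "ldet m M (ls[k:=x]) * ldet m M ls > 0" .
  qed
next
  assume pos: "\<forall>k<m. ldet m M (ls[k:=x]) * ldet m M ls > 0"
  obtain c where c0: "\<forall>r<m. (\<Sum>i<m. pt M (ls!i) r * c i) = pt M x r"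
    using detn_solve[of m "\<lambda>r k. pt M (ls!k) r" "\<lambda>r. pt M x r"] nz unfolding ldet_def by blast
  have c: "\<forall>r<m. pt M x r = (\<Sum>i<m. c i * pt M (ls!i) r)" using c0 by (simp add: mult.commute)
  have "\<forall>i<m. c i > 0"
  proof (intro allI impI)
    fix k assume k: "k < m"
    have "c k * (ldet m M ls * ldet m M ls) > 0"
      using pos k ldet_update[OF l k c] by (metis mult.assoc)
    then show "c k > 0" by (simp add: zero_less_mult_iff)
  qed
  then show "pos_comb m (pt M) x (set ls)"
    unfolding pos_comb_nth[OF d] l using c by blast
qed

lemma finite_labels[simp]: "finite (labels n)" by (simp add: labels_def)

lemma snd_set_msub:
  assumes "set ls \<subseteq> labels n" "distinct (map snd ls)" "length ls = m"
  shows "snd ` set ls \<in> msubsets m n"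
proof -
  have "card (snd ` set ls) = m" using distinct_card[OF assms(2)] assms(3) by simp
  moreover have "snd ` set ls \<subseteq> {..<n}" using assms(1) by (auto simp: labels_def)
  ultimately show ?thesis by (simp add: msubsets_def)
qed

lemma ldet_nz:
  assumes "tnz m n M" "set ls \<subseteq> labels n" "distinct (map snd ls)" "length ls = m"
  shows "ldet m M ls \<noteq> 0"
proof -
  obtain \<epsilon> where "\<epsilon> \<noteq> 0" "\<forall>M. ldet m M ls = \<epsilon> * minor m M (snd ` set ls)"
    using ldet_minor[OF assms(3,4)] by blast
  then show ?thesis using assms(1) snd_set_msub[OF assms(2-4)] by (simp add: tnz_def)
qed

lemma upd_props:
  assumes "set ls \<subseteq> labels n" "distinct (map snd ls)" "length ls = m"
    "x \<in> labels n" "snd x \<notin> snd ` set ls"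
  shows "set (ls[k:=x]) \<subseteq> labels n" "distinct (map snd (ls[k:=x]))" "length (ls[k:=x]) = m"
proof -
  show "set (ls[k:=x]) \<subseteq> labels n" using assms(1,4) set_update_subset_insert[of ls k x] by blast
  show "distinct (map snd (ls[k:=x]))" unfolding map_update
    by (rule distinct_list_update) (use assms(2,5) in auto)
  show "length (ls[k:=x]) = m" using assms(3) by simp
qed

lemma sgn_pos_iff: "(0::real) < a \<longleftrightarrow> sgn a = 1"
  by (simp add: sgn_1_pos)

lemma pc_eq_list:
  assumes M: "tnz m n M" and N: "tnz m n N" and e: "e = 1 \<or> e = -1"
    and rel: "\<forall>I\<in>msubsets m n. sgn (minor m N I) = e * sgn (minor m M I)"
    and ls: "set ls \<subseteq> labels n" "distinct (map snd ls)" "length ls = m"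
    and x: "x \<in> labels n" "snd x \<notin> snd ` set ls"
  shows "pos_comb m (pt M) x (set ls) \<longleftrightarrow> pos_comb m (pt N) x (set ls)"
proof -
  have d: "distinct ls" using ls(2) by (simp add: distinct_map)
  have key: "ldet m M (ls[k:=x]) * ldet m M ls > 0 \<longleftrightarrow> ldet m N (ls[k:=x]) * ldet m N ls > 0"
    if k: "k < m" for k
  proof -
    note u = upd_props[OF ls x, of k]
    obtain \<epsilon>0 where e0: "\<forall>M. ldet m M ls = \<epsilon>0 * minor m M (snd ` set ls)"
      using ldet_minor[OF ls(2,3)] by blast
    obtain \<epsilon>1 where e1: "\<forall>M. ldet m M (ls[k:=x]) = \<epsilon>1 * minor m M (snd ` set (ls[k:=x]))"
      using ldet_minor[OF u(2,3)] by blast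
    have I0: "snd ` set ls \<in> msubsets m n" by (rule snd_set_msub[OF ls])
    have I1: "snd ` set (ls[k:=x]) \<in> msubsets m n" by (rule snd_set_msub[OF u])
    have ee: "e * e = 1" using e by auto
    have "sgn (ldet m N (ls[k:=x]) * ldet m N ls) = sgn (ldet m M (ls[k:=x]) * ldet m M ls)"
      unfolding e0[rule_format] e1[rule_format] sgn_mult rel[rule_format, OF I0] rel[rule_format, OF I1]
      by (simp add: algebra_simps ee)
    then show ?thesis unfolding sgn_pos_iff by simp
  qed
  show ?thesis
    unfolding pc_char[OF ls(3) d ldet_nz[OF M ls]] pc_char[OF ls(3) d ldet_nz[OF N ls]]
    using key by blast
qed

lemma pc_eq:
  assumes M: "tnz m n M" and N: "tnz m n N" and e: "e = 1 \<or> e = -1"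
    and rel: "\<forall>I\<in>msubsets m n. sgn (minor m N I) = e * sgn (minor m M I)"
    and B: "B \<subseteq> labels n" "card B = m" "inj_on snd B"
    and x: "x \<in> labels n" "snd x \<notin> snd ` B"
  shows "pos_comb m (pt M) x B \<longleftrightarrow> pos_comb m (pt N) x B"
proof -
  have "finite B" using B(1) finite_labels finite_subset by blast
  then obtain ls where ls: "set ls = B" "distinct ls" using finite_distinct_list by blast
  have "distinct (map snd ls)" using ls B(3) by (simp add: distinct_map)
  moreover have "length ls = m" using distinct_card[OF ls(2)] ls(1) B(2) by simp
  ultimately show ?thesis using pc_eq_list[OF M N e rel, of ls x] ls B x by simp
qed

lemma sgn_aux:
  fixes a b c d e :: real
  assumes "0 < e*(a*b)" "0 < e*(c*d)"
  shows "sgn b * sgn d = sgn a * sgn c"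
  using assms by (auto simp: zero_less_mult_iff mult_less_0_iff sgn_if)

definition PCeq :: "nat \<Rightarrow> nat \<Rightarrow> (nat \<Rightarrow> nat \<Rightarrow> real) \<Rightarrow> (nat \<Rightarrow> nat \<Rightarrow> real) \<Rightarrow> bool" where
  "PCeq m n M N \<longleftrightarrow> (\<forall>B x. B \<subseteq> labels n \<longrightarrow> card B = m \<longrightarrow> inj_on snd B \<longrightarrow> x \<in> labels n \<longrightarrow>
      snd x \<notin> snd ` B \<longrightarrow> (pos_comb m (pt M) x B \<longleftrightarrow> pos_comb m (pt N) x B))"

lemma exch:
  assumes M: "tnz m n M" and N: "tnz m n N" and PC: "PCeq m n M N"
    and I: "I \<in> msubsets m n" and a: "a \<in> I" and b: "b < n" "b \<notin> I"
  shows "sgn (minor m M I) * sgn (minor m N I) =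
         sgn (minor m M (insert b (I - {a}))) * sgn (minor m N (insert b (I - {a})))"
proof -
  have Isub: "I \<subseteq> {..<n}" and Ic: "card I = m" using I by (auto simp: msubsets_def)
  have fI: "finite I" using Isub finite_subset by blast
  define ss where "ss = sorted_list_of_set I"
  have ssd: "distinct ss" and sss: "set ss = I" and ssl: "length ss = m"
    using fI Ic unfolding ss_def by auto
  define ls0 where "ls0 = map (\<lambda>j. (True, j)) ss"
  define x where "x = (True, b)"
  have ls0: "set ls0 \<subseteq> labels n" "distinct (map snd ls0)" "length ls0 = m"
    using Isub sss ssd ssl by (auto simp: ls0_def labels_def comp_def)
  have sls0: "snd ` set ls0 = I" using sss by (force simp: ls0_def)
  have xl: "x \<in> labels n" "snd x \<notin> snd ` set ls0" using b sls0 by (auto simp: x_def labels_def)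
  have nz0: "ldet m M ls0 \<noteq> 0" by (rule ldet_nz[OF M ls0])
  obtain c where c0: "\<forall>r<m. (\<Sum>i<m. pt M (ls0!i) r * c i) = pt M x r"
    using detn_solve[of m "\<lambda>r k. pt M (ls0!k) r" "\<lambda>r. pt M x r"] nz0 unfolding ldet_def by blast
  have c: "\<forall>r<m. pt M x r = (\<Sum>i<m. c i * pt M (ls0!i) r)" using c0 by (simp add: mult.commute)
  have cnz: "c k \<noteq> 0" if k: "k < m" for k
  proof -
    note u = upd_props[OF ls0 xl, of k]
    have "ldet m M (ls0[k:=x]) \<noteq> 0" by (rule ldet_nz[OF M u])
    then show ?thesis using ldet_update[OF ls0(3) k c] by auto
  qed
  define ls where "ls = map (\<lambda>i. (c i > 0, ss!i)) [0..<m]"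
  have msls: "map snd ls = ss" using ssl by (simp add: ls_def comp_def) (metis map_nth)
  have lsl: "length ls = m" by (simp add: ls_def)
  have lsn: "ls!i = (c i > 0, ss!i)" if "i < m" for i using that by (simp add: ls_def)
  have ls: "set ls \<subseteq> labels n" "distinct (map snd ls)" "length ls = m"
    using msls ssd lsl Isub sss ssl nth_mem[of _ ss] by (auto simp: labels_def ls_def)
  have sls: "snd ` set ls = I" using msls sss by (metis set_map)
  have dls: "distinct ls" using ls(2) by (simp add: distinct_map)
  have xl': "snd x \<notin> snd ` set ls" using b sls by (simp add: x_def)
  have pM: "pos_comb m (pt M) x (set ls)"
    unfolding pos_comb_nth[OF dls] lsl
  proof (intro exI[of _ "\<lambda>i. \<bar>c i\<bar>"] conjI allI impI)
    fix i assume "i < m" then show "\<bar>c i\<bar> > 0" using cnz by simp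
  next
    fix r assume r: "r < m"
    have "pt M x r = (\<Sum>i<m. c i * pt M (ls0!i) r)" using c r by simp
    also have "\<dots> = (\<Sum>i<m. \<bar>c i\<bar> * pt M (ls!i) r)"
      by (rule sum.cong[OF refl]) (simp add: lsn ls0_def ssl pt_sg sg_def)
    finally show "pt M x r = (\<Sum>i<m. \<bar>c i\<bar> * pt M (ls!i) r)" .
  qed
  have pN: "pos_comb m (pt N) x (set ls)"
  proof -
    have "inj_on snd (set ls)" using ls(2) by (simp add: distinct_map)
    moreover have "card (set ls) = m" using distinct_card[OF dls] lsl by simp
    ultimately show ?thesis
      using PC[unfolded PCeq_def, rule_format, of "set ls" x] pM ls(1) xl(1) xl' by blast
  qed
  obtain kk where kk: "kk < m" "ss!kk = a" using a sss ssl by (metis in_set_conv_nth)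
  have posM: "ldet m M (ls[kk:=x]) * ldet m M ls > 0"
    using pM unfolding pc_char[OF lsl dls ldet_nz[OF M ls]] using kk by blast
  have posN: "ldet m N (ls[kk:=x]) * ldet m N ls > 0"
    using pN unfolding pc_char[OF lsl dls ldet_nz[OF N ls]] using kk by blast
  note u = upd_props[OF ls xl(1) xl', of kk]
  obtain \<epsilon>0 where e0: "\<forall>M. ldet m M ls = \<epsilon>0 * minor m M (snd ` set ls)"
    using ldet_minor[OF ls(2,3)] by blast
  obtain \<epsilon>1 where e1: "\<forall>M. ldet m M (ls[kk:=x]) = \<epsilon>1 * minor m M (snd ` set (ls[kk:=x]))"
    using ldet_minor[OF u(2,3)] by blast
  have "snd ` set (ls[kk:=x]) = set ((map snd ls)[kk := snd x])" by (metis map_update set_map)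
  also have "\<dots> = insert b (I - {a})" unfolding msls using set_update_distinct[OF ssd, of kk b] kk ssl sss
    by (simp add: x_def)
  finally have J: "snd ` set (ls[kk:=x]) = insert b (I - {a})" .
  show ?thesis
    by (rule sgn_aux[of "\<epsilon>1 * \<epsilon>0"]) (use posM posN in \<open>simp_all add: e0[rule_format] e1[rule_format] J sls algebra_simps\<close>)
qed

lemma msubsets_finite: "I \<in> msubsets m n \<Longrightarrow> finite I"
  unfolding msubsets_def using finite_subset by blast

lemma recon:
  assumes M: "tnz m n M" and N: "tnz m n N" and PC: "PCeq m n M N"
  shows "\<exists>e. (e = 1 \<or> e = -1) \<and> (\<forall>I\<in>msubsets m n. sgn (minor m N I) = e * sgn (minor m M I))"
proof -
  define \<rho> where "\<rho> I = sgn (minor m M I) * sgn (minor m N I)" for I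
  have step: "\<rho> I = \<rho> J" if I: "I \<in> msubsets m n" and J: "J \<in> msubsets m n" and k: "card (J - I) = k"
    for I J k
    using I k
  proof (induction k arbitrary: I rule: less_induct)
    case (less k I)
    have fI: "finite I" and fJ: "finite J" using less.prems(1) J by (auto intro: msubsets_finite)
    have cI: "card I = m" and cJ: "card J = m" and sI: "I \<subseteq> {..<n}" and sJ: "J \<subseteq> {..<n}"
      using less.prems(1) J by (auto simp: msubsets_def)
    show ?case
    proof (cases "J - I = {}")
      case True
      then have "J \<subseteq> I" by blast
      then have "J = I" using card_subset_eq[OF fI] cI cJ by simp
      then show ?thesis by simp
    next
      case False
      then obtain b where b: "b \<in> J" "b \<notin> I" by blast
      have "\<not> I \<subseteq> J"
      proof
        assume "I \<subseteq> J" then have "I = J" using card_subset_eq[OF fJ] cI cJ by simp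
        then show False using b by simp
      qed
      then obtain a where a: "a \<in> I" "a \<notin> J" by blast
      define I' where "I' = insert b (I - {a})"
      have I': "I' \<in> msubsets m n"
      proof -
        have "card I' = m" unfolding I'_def using fI a b cI
          by (simp add: card_Diff_singleton) (metis Suc_pred card_gt_0_iff empty_iff)
        moreover have "I' \<subseteq> {..<n}" using sI sJ b unfolding I'_def by auto
        ultimately show ?thesis by (simp add: msubsets_def)
      qed
      have "J - I' = (J - I) - {b}" unfolding I'_def using a by auto
      then have "card (J - I') < k" using less.prems(2) b fJ
        by (metis Diff_iff card_Diff1_less finite_Diff)
      then have "\<rho> I' = \<rho> J" using less.IH I' by blast
      moreover have "\<rho> I = \<rho> I'" unfolding \<rho>_def I'_def
        by (rule exch[OF M N PC less.prems(1) a(1)]) (use b sJ in auto)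
      ultimately show ?thesis by simp
    qed
  qed
  show ?thesis
  proof (cases "msubsets m n = {}")
    case True then show ?thesis by auto
  next
    case False
    then obtain I0 where I0: "I0 \<in> msubsets m n" by blast
    have nzM: "minor m M I \<noteq> 0" and nzN: "minor m N I \<noteq> 0" if "I \<in> msubsets m n" for I
      using M N that by (auto simp: tnz_def)
    have "\<rho> I0 = 1 \<or> \<rho> I0 = -1" using nzM[OF I0] nzN[OF I0] unfolding \<rho>_def
      by (auto simp: sgn_if)
    moreover have "sgn (minor m N I) = \<rho> I0 * sgn (minor m M I)" if I: "I \<in> msubsets m n" for I
    proof -
      have "\<rho> I0 = \<rho> I" using step[OF I0 I refl] .
      then show ?thesis using nzM[OF I] nzN[OF I] unfolding \<rho>_def by (auto simp: sgn_if)
    qed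
    ultimately show ?thesis by blast
  qed
qed

lemma extend_subset:
  assumes J: "J \<subseteq> {..<n}" and c: "card J \<le> m" and mn: "m \<le> n"
  shows "\<exists>I. J \<subseteq> I \<and> I \<in> msubsets m n"
proof -
  have fJ: "finite J" using J finite_subset by blast
  have "card ({..<n} - J) = n - card J" using J fJ by (simp add: card_Diff_subset)
  then have "m - card J \<le> card ({..<n} - J)" using c mn by simp
  then obtain K where K: "K \<subseteq> {..<n} - J" "card K = m - card J" "finite K"
    by (rule obtain_subset_with_card_n)
  have "card (J \<union> K) = card J + card K" using K fJ by (subst card_Un_disjoint) auto
  then have "card (J \<union> K) = m" using K(2) c by simp
  then show ?thesis using J K(1) by (intro exI[of _ "J \<union> K"]) (auto simp: msubsets_def)
qed

lemma detn_zero_col: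
  assumes k: "k < m" and z: "\<And>r. r < m \<Longrightarrow> A r k = 0"
  shows "detn m A = 0"
proof -
  have "detn m A = detn m (\<lambda>r j. (if j = k then 0 else 1) * A r j)"
    by (rule detn_cong) (use z in auto)
  also have "\<dots> = (\<Prod>j<m. if j = k then 0 else 1) * detn m A" by (rule detn_scale)
  also have "(\<Prod>j<m. if j = k then 0 else 1::real) = 0" using k by (simp add: prod_zero_iff)
  finally show ?thesis by simp
qed

lemma tnz_generic:
  assumes M: "tnz m n M" and mn: "m \<le> n"
  shows "generic m n M"
  unfolding generic_def
proof (intro allI impI ballI)
  fix J c j
  assume J: "J \<subseteq> {..<n}" and cJ: "card J \<le> m" and z: "\<forall>r<m. (\<Sum>j\<in>J. c j * M r j) = 0"
    and j: "j \<in> J"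
  obtain I where I: "J \<subseteq> I" "I \<in> msubsets m n" using extend_subset[OF J cJ mn] by blast
  have fI: "finite I" using I(2) by (rule msubsets_finite)
  define ss where "ss = sorted_list_of_set I"
  have ssd: "distinct ss" and sss: "set ss = I" and ssl: "length ss = m"
    using fI I(2) unfolding ss_def msubsets_def by auto
  define c' where "c' i = (if ss!i \<in> J then c (ss!i) else 0)" for i
  have z': "(\<Sum>i<m. M r (ss!i) * c' i) = 0" if r: "r < m" for r
  proof -
    have "(\<Sum>y\<in>I. (if y \<in> J then c y * M r y else 0)) = (\<Sum>i<m. (if ss!i \<in> J then c (ss!i) * M r (ss!i) else 0))"
      using sum_distinct_nth[OF ssd, of "\<lambda>y. if y \<in> J then c y * M r y else 0"] sss ssl by simp
    moreover have "(\<Sum>i<m. M r (ss!i) * c' i) = (\<Sum>i<m. (if ss!i \<in> J then c (ss!i) * M r (ss!i) else 0))"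
      unfolding c'_def by (rule sum.cong[OF refl]) simp
    ultimately have "(\<Sum>i<m. M r (ss!i) * c' i) = (\<Sum>y\<in>I. (if y \<in> J then c y * M r y else 0))"
      by simp
    also have "\<dots> = (\<Sum>y\<in>J. c y * M r y)"
      using fI I(1) by (simp add: sum.If_cases Int_absorb1 Int_commute)
    finally show ?thesis using z r by simp
  qed
  have mnz: "minor m M I \<noteq> 0" using M I(2) by (simp add: tnz_def)
  have ck: "c' k = 0" if k: "k < m" for k
  proof -
    have "detn m (\<lambda>r j. if j = k then (\<Sum>i<m. M r (ss!i) * c' i) else M r (ss!j)) = 0"
      by (rule detn_zero_col[OF k]) (simp add: z')
    then have "c' k * minor m M I = 0"
      using detn_cramer[OF k, of "\<lambda>r i. M r (ss!i)" c'] unfolding minor_def ss_def by simp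
    then show ?thesis using mnz by simp
  qed
  obtain k where k: "k < m" "ss!k = j" using j I(1) sss ssl by (metis in_set_conv_nth subsetD)
  show "c j = 0" using ck[OF k(1)] k j by (simp add: c'_def)
qed

lemma act_minor:
  assumes t: "\<forall>i<n. t i \<noteq> 0" and p: "pp permutes {..<n}" and I: "I \<in> msubsets m n"
  shows "\<exists>g J. g \<noteq> 0 \<and> J \<in> msubsets m n \<and> (\<forall>M. minor m (act t pp M) I = g * minor m M J)"
proof -
  have fI: "finite I" using I by (rule msubsets_finite)
  have Isub: "I \<subseteq> {..<n}" using I by (simp add: msubsets_def)
  define ss where "ss = sorted_list_of_set I"
  have ssd: "distinct ss" and sss: "set ss = I" and ssl: "length ss = m"
    using fI I unfolding ss_def msubsets_def by auto
  have ip: "inv_into UNIV pp permutes {..<n}" using p by (rule permutes_inv)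
  define js where "js = map (inv_into UNIV pp) ss"
  have jsd: "distinct js" unfolding js_def using ssd permutes_inj[OF ip]
    by (simp add: distinct_map inj_on_subset[of _ UNIV])
  have jsl: "length js = m" using ssl by (simp add: js_def)
  have jss: "set js \<subseteq> {..<n}" unfolding js_def using sss Isub permutes_in_image[OF ip] by auto
  have J: "set js \<in> msubsets m n" using jss distinct_card[OF jsd] jsl by (simp add: msubsets_def)
  obtain \<epsilon> where e: "\<epsilon> = 1 \<or> \<epsilon> = -1" "\<forall>M. detn m (\<lambda>r k. M r (js!k)) = \<epsilon> * minor m M (set js)"
    using detn_cols_minor[OF jsd jsl] by blast
  define w where "w k = t (js!k)" for k
  have "minor m (act t pp M) I = ((\<Prod>k<m. w k) * \<epsilon>) * minor m M (set js)" for M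
  proof -
    have "minor m (act t pp M) I = detn m (\<lambda>r k. w k * M r (js!k))"
      unfolding minor_def act_def by (rule detn_cong) (simp add: w_def js_def ss_def[symmetric] ssl)
    also have "\<dots> = (\<Prod>k<m. w k) * detn m (\<lambda>r k. M r (js!k))" by (rule detn_scale)
    finally show ?thesis using e(2) by simp
  qed
  moreover have "(\<Prod>k<m. w k) * \<epsilon> \<noteq> 0"
  proof -
    have "w k \<noteq> 0" if "k < m" for k
    proof -
      have "js!k \<in> set js" using that jsl by simp
      then have "js!k < n" using jss by auto
      then show ?thesis using t unfolding w_def by auto
    qed
    then show ?thesis using e(1) by auto
  qed
  ultimately show ?thesis using J by blast
qed

lemma pos_comb_scale:
  assumes inj: "inj_on f B" and cpos: "\<forall>y\<in>insert x B. c y > 0"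
    and q: "\<forall>y\<in>insert x B. \<forall>r<m. q (f y) r = c y * p y r"
  shows "pos_comb m p x B \<longleftrightarrow> pos_comb m q (f x) (f ` B)"
proof
  assume "pos_comb m p x B"
  then obtain a where a: "\<forall>y\<in>B. a y > 0" "\<forall>r<m. p x r = (\<Sum>y\<in>B. a y * p y r)"
    unfolding pos_comb_def by blast
  define a' where "a' z = a (inv_into B f z) * c x / c (inv_into B f z)" for z
  have a'f: "a' (f y) = a y * c x / c y" if "y \<in> B" for y
    unfolding a'_def using inv_into_f_f[OF inj that] by simp
  have "\<forall>z\<in>f ` B. a' z > 0" using a'f a(1) cpos by auto
  moreover have "\<forall>r<m. q (f x) r = (\<Sum>z\<in>f ` B. a' z * q z r)"
  proof (intro allI impI)
    fix r assume r: "r < m"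
    have "(\<Sum>z\<in>f ` B. a' z * q z r) = (\<Sum>y\<in>B. a' (f y) * q (f y) r)"
      by (simp add: sum.reindex[OF inj])
    also have "\<dots> = (\<Sum>y\<in>B. c x * (a y * p y r))"
      by (rule sum.cong[OF refl]) (use a'f q cpos r in auto)
    also have "\<dots> = c x * p x r" using a(2) r by (simp add: sum_distrib_left)
    also have "\<dots> = q (f x) r" using q r by simp
    finally show "q (f x) r = (\<Sum>z\<in>f ` B. a' z * q z r)" by simp
  qed
  ultimately show "pos_comb m q (f x) (f ` B)" unfolding pos_comb_def by blast
next
  assume "pos_comb m q (f x) (f ` B)"
  then obtain a' where a': "\<forall>z\<in>f ` B. a' z > 0" "\<forall>r<m. q (f x) r = (\<Sum>z\<in>f ` B. a' z * q z r)"
    unfolding pos_comb_def by blast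
  define a where "a y = a' (f y) * c y / c x" for y
  have cx: "c x > 0" using cpos by simp
  have "\<forall>y\<in>B. a y > 0" using a'(1) cpos unfolding a_def by auto
  moreover have "\<forall>r<m. p x r = (\<Sum>y\<in>B. a y * p y r)"
  proof (intro allI impI)
    fix r assume r: "r < m"
    have "(\<Sum>y\<in>B. a y * p y r) = (\<Sum>y\<in>B. a' (f y) * q (f y) r) / c x"
      unfolding a_def sum_divide_distrib by (rule sum.cong[OF refl]) (use q r in auto)
    also have "\<dots> = (\<Sum>z\<in>f ` B. a' z * q z r) / c x"
      by (simp add: sum.reindex[OF inj])
    also have "\<dots> = q (f x) r / c x" using a'(2) r by simp
    also have "\<dots> = p x r" using q r cx by simp
    finally show "p x r = (\<Sum>y\<in>B. a y * p y r)" by simp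
  qed
  ultimately show "pos_comb m p x B" unfolding pos_comb_def by blast
qed

definition chi :: "nat set set \<Rightarrow> nat set \<Rightarrow> real" where
  "chi C I = (if I \<in> C then 1 else -1)"

lemma in_stratum_sgn:
  "in_stratum m n C M \<longleftrightarrow>
    (\<exists>s. (s = 1 \<or> s = -1) \<and> (\<forall>I\<in>msubsets m n. sgn (minor m M I) = s * chi C I))"
proof
  assume H: "in_stratum m n C M"
  show "\<exists>s. (s = 1 \<or> s = -1) \<and> (\<forall>I\<in>msubsets m n. sgn (minor m M I) = s * chi C I)"
  proof (cases "\<forall>I\<in>msubsets m n. (I \<in> C \<longrightarrow> minor m M I > 0) \<and> (I \<notin> C \<longrightarrow> minor m M I < 0)")
    case True
    then show ?thesis by (intro exI[of _ 1]) (auto simp: chi_def)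
  next
    case False
    then have "\<forall>I\<in>msubsets m n. (I \<in> C \<longrightarrow> minor m M I < 0) \<and> (I \<notin> C \<longrightarrow> minor m M I > 0)"
      using H unfolding in_stratum_def by blast
    then show ?thesis by (intro exI[of _ "-1"]) (auto simp: chi_def)
  qed
next
  assume "\<exists>s. (s = 1 \<or> s = -1) \<and> (\<forall>I\<in>msubsets m n. sgn (minor m M I) = s * chi C I)"
  then obtain s where s: "s = 1 \<or> s = -1" "\<forall>I\<in>msubsets m n. sgn (minor m M I) = s * chi C I"
    by blast
  have "tnz m n M" unfolding tnz_def
  proof
    fix I assume "I \<in> msubsets m n"
    then have "sgn (minor m M I) \<noteq> 0" using s by (auto simp: chi_def)
    then show "minor m M I \<noteq> 0" by auto
  qed
  moreover have "(\<forall>I\<in>msubsets m n. (I \<in> C \<longrightarrow> minor m M I > 0) \<and> (I \<notin> C \<longrightarrow> minor m M I < 0)) \<or>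
      (\<forall>I\<in>msubsets m n. (I \<in> C \<longrightarrow> minor m M I < 0) \<and> (I \<notin> C \<longrightarrow> minor m M I > 0))"
    using s by (auto simp: chi_def sgn_if split: if_splits)
  ultimately show "in_stratum m n C M" unfolding in_stratum_def by blast
qed

definition lmap :: "(nat \<Rightarrow> real) \<Rightarrow> (nat \<Rightarrow> nat) \<Rightarrow> bool \<times> nat \<Rightarrow> bool \<times> nat" where
  "lmap t pp y = (fst y = (t (snd y) > 0), pp (snd y))"

lemma lmap_snd: "snd (lmap t pp y) = pp (snd y)" by (simp add: lmap_def)

lemma lmap_aneg: "lmap t pp (aneg y) = aneg (lmap t pp y)"
  by (auto simp: lmap_def aneg_def)

lemma lmap_bij:
  assumes p: "pp permutes {..<n}"
  shows "bij_betw (lmap t pp) (labels n) (labels n)"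
proof -
  have inj: "inj_on (lmap t pp) (labels n)"
  proof (rule inj_onI)
    fix y z assume "y \<in> labels n" "z \<in> labels n" and e: "lmap t pp y = lmap t pp z"
    then have "pp (snd y) = pp (snd z)" unfolding lmap_def by simp
    then have sn: "snd y = snd z" using permutes_inj[OF p] by (meson injD)
    have "fst y = (t (snd y) > 0) \<longleftrightarrow> fst z = (t (snd z) > 0)" using e unfolding lmap_def by simp
    then have "fst y = fst z" using sn by (cases "fst y"; cases "fst z") auto
    then show "y = z" using sn by (simp add: prod_eq_iff)
  qed
  have sub: "lmap t pp ` labels n \<subseteq> labels n"
  proof
    fix z assume "z \<in> lmap t pp ` labels n"
    then obtain y where y: "y \<in> labels n" "z = lmap t pp y" by blast
    then have "snd y \<in> {..<n}" by (auto simp: labels_def)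
    then have "pp (snd y) \<in> {..<n}" using permutes_in_image[OF p] by simp
    then show "z \<in> labels n" using y by (simp add: labels_def lmap_def)
  qed
  show ?thesis unfolding bij_betw_def using inj endo_inj_surj[OF finite_labels sub inj] by simp
qed

lemma pt_act_lmap:
  assumes t: "\<forall>i<n. t i \<noteq> 0" and p: "pp permutes {..<n}" and y: "y \<in> labels n"
  shows "pt (act t pp M) (lmap t pp y) r = \<bar>t (snd y)\<bar> * pt M y r"
proof -
  obtain s j where yy: "y = (s, j)" by (cases y)
  have j: "j < n" using y yy by (simp add: labels_def)
  have ij: "inv_into UNIV pp (pp j) = j" using permutes_inverses(2)[OF p] by simp
  have "t j \<noteq> 0" using t j by simp
  then show ?thesis unfolding yy using ij
    by (cases s; cases "t j > 0") (auto simp: pt_def lmap_def act_def)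
qed

lemma scale_act:
  assumes t: "\<forall>i<n. t i \<noteq> 0" and p: "pp permutes {..<n}"
    and B: "B \<subseteq> labels n" and x: "x \<in> labels n"
  shows "pos_comb m (pt M) x B \<longleftrightarrow> pos_comb m (pt (act t pp M)) (lmap t pp x) (lmap t pp ` B)"
proof (rule pos_comb_scale[where c="\<lambda>y. \<bar>t (snd y)\<bar>"])
  show "inj_on (lmap t pp) B" using bij_betw_imp_inj_on[OF lmap_bij[OF p]] B inj_on_subset by blast
  show "\<forall>y\<in>insert x B. 0 < \<bar>t (snd y)\<bar>" using t B x by (auto simp: labels_def)
  show "\<forall>y\<in>insert x B. \<forall>r<m. pt (act t pp M) (lmap t pp y) r = \<bar>t (snd y)\<bar> * pt M y r"
    using pt_act_lmap[OF t p] B x by blast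
qed

lemma nap_inj_snd: assumes "no_antipodal_pair T" shows "inj_on snd T"
proof (rule inj_onI)
  fix y z assume y: "y \<in> T" and z: "z \<in> T" and e: "snd y = snd z"
  show "y = z"
  proof (cases "fst y = fst z")
    case True then show ?thesis using e by (simp add: prod_eq_iff)
  next
    case False
    then have "z = aneg y" using e by (cases y, cases z) (auto simp: aneg_def)
    then show ?thesis using assms y z unfolding no_antipodal_pair_def by blast
  qed
qed

lemma inj_snd_remove:
  assumes "inj_on snd T" "x \<in> T"
  shows "inj_on snd (T - {x})" "snd x \<notin> snd ` (T - {x})"
  using assms by (auto simp: inj_on_def)

lemma lmap_B_props:
  assumes p: "pp permutes {..<n}" and T: "T \<subseteq> labels n" "inj_on snd T" and x: "x \<in> T"
  shows "lmap t pp ` (T - {x}) \<subseteq> labels n"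
    "card (lmap t pp ` (T - {x})) = card (T - {x})"
    "inj_on snd (lmap t pp ` (T - {x}))"
    "lmap t pp x \<in> labels n"
    "snd (lmap t pp x) \<notin> snd ` lmap t pp ` (T - {x})"
proof -
  have bij: "bij_betw (lmap t pp) (labels n) (labels n)" by (rule lmap_bij[OF p])
  have injl: "inj_on (lmap t pp) (labels n)" using bij by (rule bij_betw_imp_inj_on)
  have img: "lmap t pp ` labels n = labels n" using bij by (simp add: bij_betw_def)
  have injp: "inj pp" using p by (rule permutes_inj)
  show "lmap t pp ` (T - {x}) \<subseteq> labels n" using T(1) img by blast
  show "card (lmap t pp ` (T - {x})) = card (T - {x})"
    by (rule card_image, rule inj_on_subset[OF injl]) (use T(1) in blast)
  show "inj_on snd (lmap t pp ` (T - {x}))"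
  proof (rule inj_onI)
    fix a b assume "a \<in> lmap t pp ` (T - {x})" "b \<in> lmap t pp ` (T - {x})" and e: "snd a = snd b"
    then obtain y z where yz: "y \<in> T - {x}" "z \<in> T - {x}" "a = lmap t pp y" "b = lmap t pp z" by blast
    then have "pp (snd y) = pp (snd z)" using e by (simp add: lmap_snd)
    then have "snd y = snd z" using injp by (meson injD)
    then have "y = z" using T(2) yz(1,2) by (meson DiffD1 inj_onD)
    then show "a = b" using yz by simp
  qed
  show "lmap t pp x \<in> labels n" using x T(1) img by blast
  show "snd (lmap t pp x) \<notin> snd ` lmap t pp ` (T - {x})"
  proof
    assume "snd (lmap t pp x) \<in> snd ` lmap t pp ` (T - {x})"
    then obtain y where y: "y \<in> T - {x}" "snd (lmap t pp x) = snd (lmap t pp y)" by blast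
    then have "pp (snd x) = pp (snd y)" by (simp add: lmap_snd)
    then have "snd x = snd y" using injp by (meson injD)
    then have "x = y" using T(2) y(1) x by (meson DiffD1 inj_onD)
    then show False using y by simp
  qed
qed

lemma fwd:
  assumes mn: "m \<le> n" and SO: "same_orbit m n C D"
    and M: "in_stratum m n C M" and N: "in_stratum m n D N"
  shows "antipodal_iso m n M N"
proof -
  obtain t pp where t: "\<forall>i<n. t i \<noteq> 0" and p: "pp permutes {..<n}"
    and H: "\<forall>M. in_stratum m n C M \<longrightarrow> in_stratum m n D (act t pp M)"
    using SO unfolding same_orbit_def by blast
  define M' where "M' = act t pp M"
  have M'D: "in_stratum m n D M'" using H M unfolding M'_def by blast
  have tM: "tnz m n M" and tN: "tnz m n N" and tM': "tnz m n M'"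
    using M N M'D by (auto simp: in_stratum_def)
  obtain s1 where s1: "s1 = 1 \<or> s1 = -1" "\<forall>I\<in>msubsets m n. sgn (minor m M' I) = s1 * chi D I"
    using M'D unfolding in_stratum_sgn by blast
  obtain s2 where s2: "s2 = 1 \<or> s2 = -1" "\<forall>I\<in>msubsets m n. sgn (minor m N I) = s2 * chi D I"
    using N unfolding in_stratum_sgn by blast
  have e: "s2 * s1 = 1 \<or> s2 * s1 = -1" using s1(1) s2(1) by auto
  have rel: "\<forall>I\<in>msubsets m n. sgn (minor m N I) = (s2 * s1) * sgn (minor m M' I)"
  proof
    fix I assume I: "I \<in> msubsets m n"
    show "sgn (minor m N I) = (s2 * s1) * sgn (minor m M' I)"
      unfolding s1(2)[rule_format, OF I] s2(2)[rule_format, OF I] using s1(1) by (elim disjE) simp_all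
  qed
  have PC: "pos_comb m (pt M) x (T - {x}) \<longleftrightarrow> pos_comb m (pt N) (lmap t pp x) (lmap t pp ` (T - {x}))"
    if T: "T \<subseteq> labels n" "card T = m + 1" "no_antipodal_pair T" and x: "x \<in> T" for T x
  proof -
    have iT: "inj_on snd T" using T(3) by (rule nap_inj_snd)
    have fT: "finite T" using T(1) finite_labels finite_subset by blast
    have cB: "card (T - {x}) = m" using T(2) x fT by simp
    note P = lmap_B_props[OF p T(1) iT x, of t]
    have "pos_comb m (pt M) x (T - {x}) \<longleftrightarrow> pos_comb m (pt M') (lmap t pp x) (lmap t pp ` (T - {x}))"
      unfolding M'_def by (rule scale_act[OF t p]) (use T(1) x in auto)
    also have "\<dots> \<longleftrightarrow> pos_comb m (pt N) (lmap t pp x) (lmap t pp ` (T - {x}))"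
      by (rule pc_eq[OF tM' tN e rel]) (use P cB in auto)
    finally show ?thesis .
  qed
  have PC': "\<forall>T\<subseteq>labels n. card T = m + 1 \<longrightarrow> no_antipodal_pair T \<longrightarrow>
     (\<forall>x\<in>T. pos_comb m (pt M) x (T - {x}) \<longleftrightarrow> pos_comb m (pt N) (lmap t pp x) (lmap t pp ` (T - {x})))"
    using PC by blast
  have an: "\<forall>x\<in>labels n. lmap t pp (aneg x) = aneg (lmap t pp x)" by (simp add: lmap_aneg)
  show ?thesis unfolding antipodal_iso_def
    by (intro conjI mn tnz_generic[OF tM mn] tnz_generic[OF tN mn] exI[of _ "lmap t pp"] lmap_bij[OF p] an PC')
qed

lemma bwd:
  assumes M0: "in_stratum m n C M0" and N0: "in_stratum m n D N0"
    and iso: "antipodal_iso m n M0 N0"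
  shows "same_orbit m n C D"
proof -
  obtain \<sigma> where bij: "bij_betw \<sigma> (labels n) (labels n)"
    and an: "\<forall>x\<in>labels n. \<sigma> (aneg x) = aneg (\<sigma> x)"
    and PC: "\<forall>T\<subseteq>labels n. card T = m + 1 \<longrightarrow> no_antipodal_pair T \<longrightarrow>
        (\<forall>x\<in>T. pos_comb m (pt M0) x (T - {x}) \<longleftrightarrow> pos_comb m (pt N0) (\<sigma> x) (\<sigma> ` (T - {x})))"
    using iso unfolding antipodal_iso_def by blast
  have injs: "inj_on \<sigma> (labels n)" using bij by (rule bij_betw_imp_inj_on)
  have imgs: "\<sigma> ` labels n = labels n" using bij by (simp add: bij_betw_def)
  have slab: "\<sigma> y \<in> labels n" if "y \<in> labels n" for y using that imgs by blast
  define pp where "pp j = (if j < n then snd (\<sigma> (True, j)) else j)" for j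
  define t where "t j = sg (fst (\<sigma> (True, j)))" for j
  have lT: "(b, j) \<in> labels n" if "j < n" for b j using that by (simp add: labels_def)
  have t: "\<forall>i<n. t i \<noteq> 0" by (simp add: t_def)
  have ppn: "pp j < n" if "j < n" for j
    using slab[OF lT[OF that, of True]] that by (auto simp: pp_def labels_def)
  have ppinj: "inj_on pp {..<n}"
  proof (rule inj_onI)
    fix j k assume j: "j \<in> {..<n}" and k: "k \<in> {..<n}" and e: "pp j = pp k"
    then have e': "snd (\<sigma> (True, j)) = snd (\<sigma> (True, k))" by (simp add: pp_def)
    show "j = k"
    proof (cases "fst (\<sigma> (True, j)) = fst (\<sigma> (True, k))")
      case True
      then have "\<sigma> (True, j) = \<sigma> (True, k)" using e' by (simp add: prod_eq_iff)
      then have "(True, j) = (True, k)" using injs lT j k by (meson inj_onD lessThan_iff)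
      then show ?thesis by simp
    next
      case False
      then have "\<sigma> (True, j) = aneg (\<sigma> (True, k))" using e' by (simp add: prod_eq_iff aneg_def)
      also have "\<dots> = \<sigma> (aneg (True, k))" using an lT k by simp
      also have "aneg (True, k) = (False, k)" by (simp add: aneg_def)
      finally have "(True, j) = (False, k)" using injs lT j k by (meson inj_onD lessThan_iff)
      then show ?thesis by simp
    qed
  qed
  have p: "pp permutes {..<n}"
  proof (rule bij_imp_permutes)
    have sub: "pp ` {..<n} \<subseteq> {..<n}" using ppn by auto
    show "bij_betw pp {..<n} {..<n}" unfolding bij_betw_def
      using ppinj endo_inj_surj[OF finite_lessThan sub ppinj] by simp
    show "pp x = x" if "x \<notin> {..<n}" for x using that by (simp add: pp_def)
  qed
  have seq: "\<sigma> y = lmap t pp y" if y: "y \<in> labels n" for y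
  proof -
    obtain b j where yy: "y = (b, j)" by (cases y)
    have j: "j < n" using y yy by (auto simp: labels_def)
    have T: "\<sigma> (True, j) = lmap t pp (True, j)"
      using j by (simp add: lmap_def t_def pp_def sg_def prod_eq_iff)
    show ?thesis
    proof (cases b)
      case True then show ?thesis using T yy by simp
    next
      case False
      have "\<sigma> (False, j) = \<sigma> (aneg (True, j))" by (simp add: aneg_def)
      also have "\<dots> = aneg (\<sigma> (True, j))" using an lT[OF j] by blast
      also have "\<dots> = lmap t pp (False, j)" unfolding T lmap_aneg[symmetric] by (simp add: aneg_def)
      finally show ?thesis using False yy by simp
    qed
  qed
  define M0' where "M0' = act t pp M0"
  have tM0: "tnz m n M0" and tN0: "tnz m n N0" using M0 N0 by (auto simp: in_stratum_def)
  have tM0': "tnz m n M0'" unfolding tnz_def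
  proof
    fix I assume I: "I \<in> msubsets m n"
    obtain g J where g: "g \<noteq> 0" "J \<in> msubsets m n" "\<forall>M. minor m (act t pp M) I = g * minor m M J"
      using act_minor[OF t p I] by blast
    show "minor m M0' I \<noteq> 0" unfolding M0'_def g(3)[rule_format] using g(1,2) tM0 by (simp add: tnz_def)
  qed
  define \<tau> where "\<tau> = inv_into (labels n) \<sigma>"
  have btau: "bij_betw \<tau> (labels n) (labels n)" unfolding \<tau>_def by (rule bij_betw_inv_into[OF bij])
  have st: "\<sigma> (\<tau> z) = z" if "z \<in> labels n" for z
    unfolding \<tau>_def by (rule bij_betw_inv_into_right[OF bij that])
  have ts: "\<tau> (\<sigma> y) = y" if "y \<in> labels n" for y
    unfolding \<tau>_def by (rule bij_betw_inv_into_left[OF bij that])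
  have injt: "inj_on \<tau> (labels n)" using btau by (rule bij_betw_imp_inj_on)
  have imgt: "\<tau> ` labels n = labels n" using btau by (simp add: bij_betw_def)
  have PCe: "PCeq m n M0' N0" unfolding PCeq_def
  proof (intro allI impI)
    fix B x assume B: "B \<subseteq> labels n" and cB: "card B = m" and iB: "inj_on snd B"
      and x: "x \<in> labels n" and sx: "snd x \<notin> snd ` B"
    have xB: "x \<notin> B" using sx by blast
    have fB: "finite B" using B finite_labels finite_subset by blast
    define T' where "T' = insert x B"
    have T'l: "T' \<subseteq> labels n" using B x by (simp add: T'_def)
    have iT': "inj_on snd T'" unfolding T'_def using iB sx by (simp add: xB)
    have cT': "card T' = m + 1" unfolding T'_def using xB fB cB by simp
    define T where "T = \<tau> ` T'"
    have injT': "inj_on \<tau> T'" using injt T'l inj_on_subset by blast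
    have Tl: "T \<subseteq> labels n" unfolding T_def using T'l imgt by blast
    have cT: "card T = m + 1" unfolding T_def using card_image[OF injT'] cT' by simp
    have nap: "no_antipodal_pair T" unfolding no_antipodal_pair_def
    proof (intro ballI notI)
      fix y assume y: "y \<in> T" and ay: "aneg y \<in> T"
      have yl: "y \<in> labels n" using y Tl by blast
      have "\<sigma> y \<in> T'" using y st T'l unfolding T_def by auto
      moreover have "\<sigma> (aneg y) \<in> T'" using ay st T'l unfolding T_def by auto
      moreover have "\<sigma> (aneg y) = aneg (\<sigma> y)" using an yl by blast
      ultimately have "\<sigma> y \<in> T'" "aneg (\<sigma> y) \<in> T'" by auto
      moreover have "snd (aneg (\<sigma> y)) = snd (\<sigma> y)" "aneg (\<sigma> y) \<noteq> \<sigma> y"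
        by (auto simp: aneg_def prod_eq_iff)
      ultimately show False using iT' by (meson inj_onD)
    qed
    define x0 where "x0 = \<tau> x"
    have x0T: "x0 \<in> T" unfolding x0_def T_def T'_def by simp
    have Tx0: "T - {x0} = \<tau> ` B"
      unfolding T_def T'_def x0_def using injT' xB unfolding T'_def
      by (simp add: inj_on_image_set_diff[of _ "insert x B"])
    have sx0: "\<sigma> x0 = x" unfolding x0_def using st x by simp
    have sB: "\<sigma> ` \<tau> ` B = B" using st B by (force simp: image_image)
    have x0l: "x0 \<in> labels n" using x0T Tl by blast
    have B0l: "\<tau> ` B \<subseteq> labels n" using B imgt by blast
    have l1: "pos_comb m (pt M0) x0 (\<tau> ` B) \<longleftrightarrow> pos_comb m (pt N0) x B"
      using PC[rule_format, OF Tl cT nap x0T] unfolding Tx0 sx0 sB .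
    have lx0: "lmap t pp x0 = x" using seq[OF x0l] sx0 by simp
    have lB: "lmap t pp ` \<tau> ` B = B" using seq B0l sB by (metis (no_types, lifting) image_cong subsetD)
    have l2: "pos_comb m (pt M0) x0 (\<tau> ` B) \<longleftrightarrow> pos_comb m (pt M0') x B"
      using scale_act[OF t p B0l x0l, of m M0] unfolding M0'_def lx0 lB .
    show "pos_comb m (pt M0') x B \<longleftrightarrow> pos_comb m (pt N0) x B" using l1 l2 by simp
  qed
  obtain e where e: "e = 1 \<or> e = -1" and rel: "\<forall>I\<in>msubsets m n. sgn (minor m N0 I) = e * sgn (minor m M0' I)"
    using recon[OF tM0' tN0 PCe] by blast
  obtain s0 where s0: "s0 = 1 \<or> s0 = -1" "\<forall>I\<in>msubsets m n. sgn (minor m M0 I) = s0 * chi C I"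
    using M0 unfolding in_stratum_sgn by blast
  obtain sN where sN: "sN = 1 \<or> sN = -1" "\<forall>I\<in>msubsets m n. sgn (minor m N0 I) = sN * chi D I"
    using N0 unfolding in_stratum_sgn by blast
  have "in_stratum m n D (act t pp M)" if M: "in_stratum m n C M" for M
  proof -
    obtain sM where sM: "sM = 1 \<or> sM = -1" "\<forall>I\<in>msubsets m n. sgn (minor m M I) = sM * chi C I"
      using M unfolding in_stratum_sgn by blast
    have "\<forall>I\<in>msubsets m n. sgn (minor m (act t pp M) I) = (sM * s0 * e * sN) * chi D I"
    proof
      fix I assume I: "I \<in> msubsets m n"
      obtain g J where g: "g \<noteq> 0" "J \<in> msubsets m n" "\<forall>M. minor m (act t pp M) I = g * minor m M J"
        using act_minor[OF t p I] by blast
      have h1: "sgn (minor m (act t pp M) I) = sgn g * (sM * chi C J)"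
        unfolding g(3)[rule_format] sgn_mult sM(2)[rule_format, OF g(2)] ..
      have h2: "sN * chi D I = e * (sgn g * (s0 * chi C J))"
        using rel[rule_format, OF I] sN(2)[rule_format, OF I]
        unfolding M0'_def g(3)[rule_format] sgn_mult s0(2)[rule_format, OF g(2)] by simp
      have "(sM * s0 * e * sN) * chi D I = sM * s0 * e * (sN * chi D I)" by (simp add: mult.assoc)
      also have "\<dots> = (e * e) * (s0 * s0) * (sgn g * (sM * chi C J))" unfolding h2 by (simp add: algebra_simps)
      also have "\<dots> = sgn g * (sM * chi C J)" using e s0(1) by auto
      finally have eq: "(sM * s0 * e * sN) * chi D I = sgn g * (sM * chi C J)" .
      show "sgn (minor m (act t pp M) I) = (sM * s0 * e * sN) * chi D I" by (rule trans[OF h1 eq[symmetric]])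
    qed
    moreover have "sM * s0 * e * sN = 1 \<or> sM * s0 * e * sN = -1" using sM(1) s0(1) e sN(1) by auto
    ultimately show ?thesis unfolding in_stratum_sgn by blast
  qed
  then show ?thesis unfolding same_orbit_def using t p by blast
qed


theorem mainTheorem2:
  fixes m n :: nat and C D :: "nat set set"
  assumes "1 \<le> m" and "m \<le> n"
    and "C \<subseteq> msubsets m n" and "D \<subseteq> msubsets m n"
    and "\<exists>M. in_stratum m n C M" and "\<exists>N. in_stratum m n D N"
  shows "same_orbit m n C D \<longleftrightarrow>
    (\<forall>M N. in_stratum m n C M \<longrightarrow> in_stratum m n D N \<longrightarrow> antipodal_iso m n M N)"
proof
  assume SO: "same_orbit m n C D"
  show "\<forall>M N. in_stratum m n C M \<longrightarrow> in_stratum m n D N \<longrightarrow> antipodal_iso m n M N"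
    using fwd[OF assms(2) SO] by blast
next
  assume H: "\<forall>M N. in_stratum m n C M \<longrightarrow> in_stratum m n D N \<longrightarrow> antipodal_iso m n M N"
  obtain M0 where M0: "in_stratum m n C M0" using assms(5) by blast
  obtain N0 where N0: "in_stratum m n D N0" using assms(6) by blast
  show "same_orbit m n C D" using bwd[OF M0 N0] H M0 N0 by blast
qed

end
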